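(* Let $X$ be a compact metric space and $F\colon X\to 2^X$ a set-valued mapping with the specification property. Then the set-valued map $\gamma\colon\varprojlim F\to 2^{\varprojlim F}$ has the specification property.
   Context: $d$ is the metric on $X$; $2^Y$ is the space of nonempty closed subsets of $Y$; a set-valued mapping is an upper semicontinuous $F\colon X\to 2^X$. The inverse limit is $\varprojlim F=\{(x_0,x_1,\dots)\in X^{\mathbb{N}}: x_i\in F(x_{i+1})\text{ for all } i\}$ with the product topology (and any compatible metric). $\gamma$ is defined by $\gamma((x_0,x_1,\dots))=\{(x_{-1},x_0,x_1,\dots): x_{-1}\in F(x_0)\}$. For a set-valued map $G$ on a compact metric space $(Y,\rho)$, an orbit of $y$ is a sequence $(y_j)_{j=0}^\infty$ with $y_0=y$, $y_{j+1}\in G(y_j)$, and $G$ has the specification property if for every $\epsilon>0$ there is $M\in\mathbb{N}$ such that for any $n$, any $y^1,\dots,y^n\in Y$, any integers $0\le a_1\le b_1<a_2\le\dots<a_n\le b_n$ with $a_{i+1}-b_i>M$, any orbits $(y^i_j)_{j=0}^\infty$ of the $y^i$, and any $P>M+b_n-a_1$, there is $z\in Y$ with an orbit $(z_j)_{j=0}^\infty$ such that $\rho(z_j,y^i_j)<\epsilon$ for $1\le i\le n$, $a_i\le j\le b_i$, and $z_P=z$. *)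

theory Defs
  imports "HOL-Analysis.Analysis"
begin

definition usc_setvalued :: "'a::metric_space set \<Rightarrow> ('a \<Rightarrow> 'a set) \<Rightarrow> bool" where
  "usc_setvalued X F \<longleftrightarrow>
     (\<forall>x\<in>X. F x \<subseteq> X \<and> F x \<noteq> {} \<and> closed (F x)) \<and>
     (\<forall>x\<in>X. \<forall>U. open U \<and> F x \<subseteq> U \<longrightarrow>
        (\<exists>V. open V \<and> x \<in> V \<and> (\<forall>y\<in>X \<inter> V. F y \<subseteq> U)))"

definition inv_lim :: "'a set \<Rightarrow> ('a \<Rightarrow> 'a set) \<Rightarrow> (nat \<Rightarrow> 'a) set" where
  "inv_lim X F = {x. (\<forall>i. x i \<in> X) \<and> (\<forall>i. x i \<in> F (x (Suc i)))}"

definition gamma_map :: "('a \<Rightarrow> 'a set) \<Rightarrow> (nat \<Rightarrow> 'a) \<Rightarrow> (nat \<Rightarrow> 'a) set" where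
  "gamma_map F x = {(\<lambda>i. if i = 0 then x' else x (i - 1)) | x'. x' \<in> F (x 0)}"

definition orbit_of :: "('b \<Rightarrow> 'b set) \<Rightarrow> 'b \<Rightarrow> (nat \<Rightarrow> 'b) \<Rightarrow> bool" where
  "orbit_of G y ys \<longleftrightarrow> ys 0 = y \<and> (\<forall>j. ys (Suc j) \<in> G (ys j))"

definition has_specification :: "'b set \<Rightarrow> ('b \<Rightarrow> 'b \<Rightarrow> real) \<Rightarrow> ('b \<Rightarrow> 'b set) \<Rightarrow> bool" where
  "has_specification Y \<rho> G \<longleftrightarrow>
    (\<forall>\<epsilon>>0. \<exists>M::nat. \<forall>(n::nat) (y::nat \<Rightarrow> 'b) (a::nat \<Rightarrow> nat) (b::nat \<Rightarrow> nat)
        (orb::nat \<Rightarrow> nat \<Rightarrow> 'b) (P::nat).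
      n \<ge> 1 \<and> (\<forall>i\<in>{1..n}. y i \<in> Y) \<and>
      (\<forall>i\<in>{1..n}. a i \<le> b i) \<and>
      (\<forall>i. 1 \<le> i \<and> i < n \<longrightarrow> b i < a (Suc i) \<and> a (Suc i) - b i > M) \<and>
      (\<forall>i\<in>{1..n}. orbit_of G (y i) (orb i)) \<and>
      P > M + b n - a 1
      \<longrightarrow> (\<exists>z\<in>Y. \<exists>zs. orbit_of G z zs \<and>
             (\<forall>i\<in>{1..n}. \<forall>j\<in>{a i..b i}. \<rho> (zs j) (orb i j) < \<epsilon>) \<and> zs P = z))"

end

theory Submission
  imports Defs
begin


lemma usc_sub: "usc_setvalued X F \<Longrightarrow> x \<in> X \<Longrightarrow> F x \<subseteq> X"
  by (simp add: usc_setvalued_def)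

lemma closed_graph:
  fixes X :: "'a::metric_space set"
  assumes X: "closed X" and usc: "usc_setvalued X F"
    and xs: "\<And>n. xs n \<in> X" and xl: "xs \<longlonglongrightarrow> x"
    and ys: "\<And>n. ys n \<in> F (xs n)" and yl: "ys \<longlonglongrightarrow> y"
  shows "y \<in> F x"
proof (rule ccontr)
  assume ny: "y \<notin> F x"
  have xX: "x \<in> X" using closed_sequentially[OF X] xs xl by blast
  have Fx: "closed (F x)" "F x \<noteq> {}" using usc xX by (auto simp: usc_setvalued_def)
  define r where "r = infdist y (F x)"
  have rpos: "r > 0" using ny Fx in_closed_iff_infdist_zero[of "F x" y] infdist_nonneg[of y "F x"]
    unfolding r_def by linarith
  define U where "U = {z. infdist z (F x) < r/2}"
  have oU: "open U" unfolding U_def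
    by (intro open_Collect_less continuous_intros)
  have FU: "F x \<subseteq> U" using rpos by (auto simp: U_def infdist_zero)
  obtain V where V: "open V" "x \<in> V" "\<forall>z\<in>X \<inter> V. F z \<subseteq> U"
    using usc xX oU FU unfolding usc_setvalued_def by metis
  have "eventually (\<lambda>n. xs n \<in> V) sequentially"
    using topological_tendstoD[OF xl V(1,2)] .
  then have ev: "eventually (\<lambda>n. infdist (ys n) (F x) \<le> r/2) sequentially"
    by eventually_elim (use V(3) xs ys in \<open>force simp: U_def\<close>)
  have "(\<lambda>n. infdist (ys n) (F x)) \<longlonglongrightarrow> infdist y (F x)"
    by (intro tendsto_infdist yl)
  then have "r \<le> r/2" unfolding r_def using ev
    by (intro tendsto_upperbound) (auto simp: r_def)
  then show False using rpos by simp
qed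

lemma compact_inv_lim:
  fixes X :: "'a::metric_space set"
  assumes X: "compact X" and usc: "usc_setvalued X F"
  shows "compact (inv_lim X F)"
proof -
  have "compactin (product_topology (\<lambda>i. euclidean) UNIV) (PiE UNIV (\<lambda>_::nat. X))"
    using X by (simp add: compactin_PiE)
  then have cP: "compact (PiE UNIV (\<lambda>_::nat. X))"
    by (simp add: euclidean_product_topology)
  have sub: "inv_lim X F \<subseteq> PiE UNIV (\<lambda>_::nat. X)"
    by (auto simp: inv_lim_def)
  have coord: "(\<lambda>n. f n i) \<longlonglongrightarrow> l i" if "f \<longlonglongrightarrow> l" for f :: "nat \<Rightarrow> nat \<Rightarrow> 'a" and l i
    using continuous_on_tendsto_compose[OF continuous_on_product_coordinates[of i] that] by simp
  have cl: "closed (inv_lim X F)"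
    unfolding closed_sequential_limits
  proof (intro allI impI, elim conjE)
    fix f l assume f: "\<forall>n. f n \<in> inv_lim X F" and fl: "f \<longlonglongrightarrow> l"
    have cX: "closed X" using X compact_imp_closed by auto
    have lX: "l i \<in> X" for i
      using closed_sequentially[OF cX, of "\<lambda>n. f n i"] f coord[OF fl, of i] by (auto simp: inv_lim_def)
    have "l i \<in> F (l (Suc i))" for i
      by (rule closed_graph[OF cX usc, of "\<lambda>n. f n (Suc i)" _ "\<lambda>n. f n i"])
        (use f coord[OF fl] in \<open>auto simp: inv_lim_def\<close>)
    then show "l \<in> inv_lim X F" using lX by (auto simp: inv_lim_def)
  qed
  show ?thesis using compact_Int_closed[OF cP cl] sub by (simp add: Int_absorb1)
qed



lemma uc_rho:
  fixes S :: "(nat \<Rightarrow> 'a::metric_space) set"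
  assumes cS: "compact S" and ms: "Metric_space S \<rho>"
    and top: "Metric_space.mtopology S \<rho> = top_of_set S" and e: "\<epsilon> > 0"
  shows "\<exists>\<delta>>0. \<forall>x\<in>S. \<forall>y\<in>S. dist x y < \<delta> \<longrightarrow> \<rho> x y < \<epsilon>"
proof (rule ccontr)
  interpret M: Metric_space S \<rho> by (rule ms)
  assume nt: "\<not> ?thesis"
  have ex: "\<exists>x\<in>S. \<exists>y\<in>S. dist x y < 1 / real (Suc n) \<and> \<not> \<rho> x y < \<epsilon>" for n
  proof -
    have "1 / real (Suc n) > 0" by simp
    then show ?thesis using nt by blast
  qed
  have "\<forall>n. \<exists>p. fst p \<in> S \<and> snd p \<in> S \<and> dist (fst p) (snd p) < 1 / real (Suc n) \<and> \<not> \<rho> (fst p) (snd p) < \<epsilon>"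
  proof
    fix n
    obtain a b where "a \<in> S" "b \<in> S" "dist a b < 1 / real (Suc n)" "\<not> \<rho> a b < \<epsilon>"
      using ex[of n] by blast
    then show "\<exists>p. fst p \<in> S \<and> snd p \<in> S \<and> dist (fst p) (snd p) < 1 / real (Suc n) \<and> \<not> \<rho> (fst p) (snd p) < \<epsilon>"
      by (intro exI[of _ "(a,b)"]) simp
  qed
  then obtain p where p: "\<forall>n. fst (p n) \<in> S \<and> snd (p n) \<in> S \<and> dist (fst (p n)) (snd (p n)) < 1 / real (Suc n) \<and> \<not> \<rho> (fst (p n)) (snd (p n)) < \<epsilon>"
    by (rule choice[THEN exE]) blast
  define x where "x n = fst (p n)" for n
  define y where "y n = snd (p n)" for n
  have xy: "\<And>n. x n \<in> S" "\<And>n. y n \<in> S" "\<And>n. dist (x n) (y n) < 1 / Suc n"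
    "\<And>n. \<rho> (x n) (y n) \<ge> \<epsilon>"
    using p unfolding x_def y_def by (auto simp: not_less)
  obtain l r where l: "l \<in> S" "strict_mono r" "(x \<circ> r) \<longlonglongrightarrow> l"
    using cS[unfolded compact_def, rule_format, of x] xy(1) by blast
  have d0: "(\<lambda>n. dist (x (r n)) (y (r n))) \<longlonglongrightarrow> 0"
  proof (rule tendsto_sandwich[of "\<lambda>_. 0" _ _ "\<lambda>n. 1 / Suc (r n)"])
    show "(\<lambda>n. 1 / real (Suc (r n))) \<longlonglongrightarrow> 0"
      using LIMSEQ_subseq_LIMSEQ[OF LIMSEQ_Suc[OF lim_inverse_n'] l(2)]
      by (simp add: o_def)
    show "\<forall>\<^sub>F n in sequentially. dist (x (r n)) (y (r n)) \<le> 1 / real (Suc (r n))"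
    proof (intro always_eventually allI)
      fix n show "dist (x (r n)) (y (r n)) \<le> 1 / real (Suc (r n))"
        using xy(3)[of "r n"] by linarith
    qed
    show "\<forall>\<^sub>F n in sequentially. 0 \<le> dist (x (r n)) (y (r n))" by simp
    show "((\<lambda>_. 0) \<longlongrightarrow> 0) sequentially" by (rule tendsto_const)
  qed
  have yl: "(y \<circ> r) \<longlonglongrightarrow> l"
  proof -
    have "(\<lambda>n. dist (y (r n)) l) \<longlonglongrightarrow> 0"
    proof (rule tendsto_sandwich[of "\<lambda>_. 0" _ _ "\<lambda>n. dist (x (r n)) (y (r n)) + dist (x (r n)) l"])
      show "(\<lambda>n. dist (x (r n)) (y (r n)) + dist (x (r n)) l) \<longlonglongrightarrow> 0"
      proof -
        have a: "(\<lambda>n. dist (x (r n)) l) \<longlonglongrightarrow> 0"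
          using tendsto_dist_iff[THEN iffD1, OF l(3)] unfolding o_def .
        show ?thesis using tendsto_add[OF d0 a] by simp
      qed
      show "\<forall>\<^sub>F n in sequentially. dist (y (r n)) l \<le> dist (x (r n)) (y (r n)) + dist (x (r n)) l"
        by (intro always_eventually allI dist_triangle3)
    show "\<forall>\<^sub>F n in sequentially. 0 \<le> dist (y (r n)) l" by simp
    show "((\<lambda>_. 0) \<longlongrightarrow> 0) sequentially" by (rule tendsto_const)
    qed
    then show ?thesis unfolding o_def by (rule tendsto_dist_iff[THEN iffD2])
  qed
  have lim1: "limitin M.mtopology (x \<circ> r) l sequentially"
    unfolding top using l xy(1) by (simp add: limitin_subtopology)
  have lim2: "limitin M.mtopology (y \<circ> r) l sequentially"
    unfolding top using l yl xy(2) by (simp add: limitin_subtopology)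
  have e2: "\<epsilon>/2 > 0" using e by simp
  have "eventually (\<lambda>n. \<rho> (x (r n)) l < \<epsilon>/2 \<and> \<rho> (y (r n)) l < \<epsilon>/2) sequentially"
  proof (rule eventually_conj)
    show "eventually (\<lambda>n. \<rho> (x (r n)) l < \<epsilon>/2) sequentially"
    proof -
      have "\<forall>\<^sub>F n in sequentially. x (r n) \<in> S \<and> \<rho> (x (r n)) l < \<epsilon>/2"
        using lim1 e2 unfolding M.limitin_metric o_def by blast
      then show ?thesis by (rule eventually_mono) blast
    qed
    show "eventually (\<lambda>n. \<rho> (y (r n)) l < \<epsilon>/2) sequentially"
    proof -
      have "\<forall>\<^sub>F n in sequentially. y (r n) \<in> S \<and> \<rho> (y (r n)) l < \<epsilon>/2"
        using lim2 e2 unfolding M.limitin_metric o_def by blast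
      then show ?thesis by (rule eventually_mono) blast
    qed
  qed
  then obtain N0 where "\<forall>n\<ge>N0. \<rho> (x (r n)) l < \<epsilon>/2 \<and> \<rho> (y (r n)) l < \<epsilon>/2"
    unfolding eventually_sequentially by blast
  then obtain n where n: "\<rho> (x (r n)) l < \<epsilon>/2" "\<rho> (y (r n)) l < \<epsilon>/2"
    by blast
  have "\<rho> (x (r n)) (y (r n)) \<le> \<rho> (x (r n)) l + \<rho> l (y (r n))"
    by (rule M.triangle) (use xy l in auto)
  also have "\<dots> < \<epsilon>" using n M.commute[of l "y (r n)"] by simp
  finally show False using xy(4)[of "r n"] by simp
qed

lemma dist_fun_small:
  fixes x y :: "nat \<Rightarrow> 'a::metric_space"
  assumes "\<And>k. k \<le> Max (from_nat ` {..N}) \<Longrightarrow> dist (x k) (y k) < \<eta>"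
  shows "dist x y < 2 * \<eta> + (1/2)^N"
proof -
  have fin: "finite {dist (x (from_nat n)) (y (from_nat n)) |n. n \<le> N}" by simp
  have ne: "{dist (x (from_nat n)) (y (from_nat n)) |n. n \<le> N} \<noteq> {}" by auto
  have "Max {dist (x (from_nat n)) (y (from_nat n)) |n::nat. n \<le> N} < \<eta>"
    unfolding Max_less_iff[OF fin ne]
  proof safe
    fix n :: nat assume "n \<le> N"
    then have "(from_nat n :: nat) \<le> Max (from_nat ` {..N})" by (intro Max_ge) auto
    then show "dist (x (from_nat n)) (y (from_nat n)) < \<eta>" using assms by blast
  qed
  then show ?thesis using dist_fun_le_dist_first_terms[of x y N] by linarith
qed



lemma gamma_orbit:
  assumes usc: "usc_setvalued X F" and y: "y \<in> inv_lim X F"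
    and orb: "orbit_of (gamma_map F) y orb"
  shows "\<And>j k. orb (Suc j) (Suc k) = orb j k"
    and "\<And>j. orb (Suc j) 0 \<in> F (orb j 0)"
    and "\<And>j. orb j \<in> inv_lim X F"
proof -
  have st: "orb (Suc j) (Suc k) = orb j k \<and> orb (Suc j) 0 \<in> F (orb j 0)" for j k
  proof -
    have "orb (Suc j) \<in> gamma_map F (orb j)" using orb by (simp add: orbit_of_def)
    then obtain x' where "orb (Suc j) = (\<lambda>i. if i = 0 then x' else orb j (i - 1))" "x' \<in> F (orb j 0)"
      by (auto simp: gamma_map_def)
    then show ?thesis by simp
  qed
  then show "\<And>j k. orb (Suc j) (Suc k) = orb j k" and "\<And>j. orb (Suc j) 0 \<in> F (orb j 0)" by auto
  show "orb j \<in> inv_lim X F" for j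
  proof (induction j)
    case 0 then show ?case using y orb by (simp add: orbit_of_def)
  next
    case (Suc j)
    have "orb (Suc j) i \<in> X" for i
    proof (cases i)
      case 0 then show ?thesis using st[of j 0] usc_sub[OF usc, of "orb j 0"] Suc
        by (auto simp: inv_lim_def)
    next
      case (Suc i') then show ?thesis using st[of j i'] Suc.IH by (auto simp: inv_lim_def)
    qed
    moreover have "orb (Suc j) i \<in> F (orb (Suc j) (Suc i))" for i
    proof (cases i)
      case 0 then show ?thesis using st[of j 0] by simp
    next
      case (Suc i') then show ?thesis using st[of j i'] st[of j "Suc i'"] Suc.IH
        by (auto simp: inv_lim_def)
    qed
    ultimately show ?case by (simp add: inv_lim_def)
  qed
qed

lemma shift_eq:
  assumes "\<And>j k. orb (Suc j) (Suc k) = orb j k"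
  shows "orb (j + m) (k + m) = (orb j k :: 'a)"
  by (induction m) (simp_all add: assms)

lemma orb_u:
  assumes "\<And>j k. orb (Suc j) (Suc k) = orb j k" and "k \<le> j + N"
  shows "orb j k = (if j + N - k \<le> N then orb 0 (N - (j + N - k)) else orb (j + N - k - N) 0)"
proof (cases "k \<le> j")
  case True
  then have "orb j k = orb (j - k) 0" using shift_eq[where orb=orb, OF assms(1), of "j-k" k 0] by simp
  then show ?thesis using True shift_eq[where orb=orb, OF assms(1), of 0 j 0] by auto
next
  case False
  then have "orb j k = orb 0 (k - j)" using shift_eq[where orb=orb, OF assms(1), of 0 j "k-j"] by simp
  moreover have "N - (j + N - k) = k - j" "j + N - k \<le> N" using False assms(2) by arith+
  ultimately show ?thesis by simp
qed

lemma chain_le: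
  fixes a b :: "nat \<Rightarrow> nat"
  assumes ab: "\<forall>i\<in>{1..n}. a i \<le> b i"
    and ch: "\<forall>i. 1 \<le> i \<and> i < n \<longrightarrow> b i < a (Suc i)"
  shows "\<And>i. i \<in> {1..n} \<Longrightarrow> a 1 \<le> a i" and "\<And>i. i \<in> {1..n} \<Longrightarrow> b i \<le> b n"
proof -
  have "\<forall>i. 1 \<le> i \<and> i \<le> j \<and> j \<le> n \<longrightarrow> a i \<le> a j \<and> b i \<le> b j" for j
  proof (induction j)
    case 0 then show ?case by simp
  next
    case (Suc j)
    show ?case
    proof (intro allI impI)
      fix i assume i: "1 \<le> i \<and> i \<le> Suc j \<and> Suc j \<le> n"
      show "a i \<le> a (Suc j) \<and> b i \<le> b (Suc j)"
      proof (cases "i = Suc j")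
        case False
        then have "1 \<le> j" "i \<le> j" "j < n" "1 \<le> i" using i by auto
        then have "a i \<le> a j \<and> b i \<le> b j" using Suc.IH by auto
        moreover have "b j < a (Suc j)" using ch \<open>1 \<le> j\<close> \<open>j < n\<close> by auto
        moreover have "a j \<le> b j" "a (Suc j) \<le> b (Suc j)" using ab \<open>1 \<le> j\<close> \<open>j < n\<close> by auto
        ultimately show ?thesis by linarith
      qed simp
    qed
  qed
  then show "\<And>i. i \<in> {1..n} \<Longrightarrow> a 1 \<le> a i" and "\<And>i. i \<in> {1..n} \<Longrightarrow> b i \<le> b n"
    by auto
qed



theorem corollary10:
  fixes X :: "'a::metric_space set" and F :: "'a \<Rightarrow> 'a set"
    and \<rho> :: "(nat \<Rightarrow> 'a) \<Rightarrow> (nat \<Rightarrow> 'a) \<Rightarrow> real"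
  assumes "compact X"
    and "usc_setvalued X F"
    and "has_specification X dist F"
    and "Metric_space (inv_lim X F) \<rho>"
    and "Metric_space.mtopology (inv_lim X F) \<rho> = top_of_set (inv_lim X F)"
  shows "has_specification (inv_lim X F) \<rho> (gamma_map F)"
proof -
  let ?S = "inv_lim X F"
  have cS: "compact ?S" by (rule compact_inv_lim[OF assms(1,2)])
  have sub: "\<And>x. x \<in> X \<Longrightarrow> F x \<subseteq> X" using usc_sub[OF assms(2)] by blast
  show ?thesis unfolding has_specification_def
  proof (intro allI impI)
    fix \<epsilon> :: real assume e: "\<epsilon> > 0"
    obtain \<delta> where d: "\<delta> > 0" "\<forall>x\<in>?S. \<forall>y\<in>?S. dist x y < \<delta> \<longrightarrow> \<rho> x y < \<epsilon>"
      using uc_rho[OF cS assms(4,5) e] by blast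
    obtain N where N: "(1/2::real)^N < \<delta>/2"
      using real_arch_pow_inv[of "\<delta>/2" "1/2::real"] d(1) by auto
    define \<eta> where "\<eta> = \<delta>/8"
    define K where "K = Max ((from_nat :: nat \<Rightarrow> nat) ` {..N})"
    have eta: "\<eta> > 0" using d by (simp add: \<eta>_def)
    obtain M0 where M0: "\<forall>(n::nat) (y::nat \<Rightarrow> 'a) (a::nat \<Rightarrow> nat) (b::nat \<Rightarrow> nat)
        (orb::nat \<Rightarrow> nat \<Rightarrow> 'a) (P::nat).
      n \<ge> 1 \<and> (\<forall>i\<in>{1..n}. y i \<in> X) \<and>
      (\<forall>i\<in>{1..n}. a i \<le> b i) \<and>
      (\<forall>i. 1 \<le> i \<and> i < n \<longrightarrow> b i < a (Suc i) \<and> a (Suc i) - b i > M0) \<and>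
      (\<forall>i\<in>{1..n}. orbit_of F (y i) (orb i)) \<and>
      P > M0 + b n - a 1
      \<longrightarrow> (\<exists>z\<in>X. \<exists>zs. orbit_of F z zs \<and>
             (\<forall>i\<in>{1..n}. \<forall>j\<in>{a i..b i}. dist (zs j) (orb i j) < \<eta>) \<and> zs P = z)"
      using assms(3) eta unfolding has_specification_def by blast
    show "\<exists>M::nat. \<forall>(n::nat) (y::nat \<Rightarrow> nat \<Rightarrow> 'a) (a::nat \<Rightarrow> nat) (b::nat \<Rightarrow> nat)
        (orb::nat \<Rightarrow> nat \<Rightarrow> nat \<Rightarrow> 'a) (P::nat).
      n \<ge> 1 \<and> (\<forall>i\<in>{1..n}. y i \<in> ?S) \<and>
      (\<forall>i\<in>{1..n}. a i \<le> b i) \<and>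
      (\<forall>i. 1 \<le> i \<and> i < n \<longrightarrow> b i < a (Suc i) \<and> a (Suc i) - b i > M) \<and>
      (\<forall>i\<in>{1..n}. orbit_of (gamma_map F) (y i) (orb i)) \<and>
      P > M + b n - a 1
      \<longrightarrow> (\<exists>z\<in>?S. \<exists>zs. orbit_of (gamma_map F) z zs \<and>
             (\<forall>i\<in>{1..n}. \<forall>j\<in>{a i..b i}. \<rho> (zs j) (orb i j) < \<epsilon>) \<and> zs P = z)"
    proof (rule exI[of _ "M0 + K"], intro allI impI, elim conjE)
      fix n :: nat and y :: "nat \<Rightarrow> nat \<Rightarrow> 'a" and a b :: "nat \<Rightarrow> nat"
        and orb :: "nat \<Rightarrow> nat \<Rightarrow> nat \<Rightarrow> 'a" and P :: nat
      assume n1: "n \<ge> 1" and yS: "\<forall>i\<in>{1..n}. y i \<in> ?S" and ab: "\<forall>i\<in>{1..n}. a i \<le> b i"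
        and gap: "\<forall>i. 1 \<le> i \<and> i < n \<longrightarrow> b i < a (Suc i) \<and> a (Suc i) - b i > M0 + K"
        and orbs: "\<forall>i\<in>{1..n}. orbit_of (gamma_map F) (y i) (orb i)"
        and PP: "P > M0 + K + b n - a 1"
      have ch: "\<forall>i. 1 \<le> i \<and> i < n \<longrightarrow> b i < a (Suc i)" using gap by blast
      note a1 = chain_le(1)[OF ab ch] and bn = chain_le(2)[OF ab ch]
      have in1: "1 \<in> {1..n}" using n1 by simp
      have a1bn: "a 1 \<le> b n" using a1 bn ab in1 by (meson order.trans)
      have Pbig: "P > b n + K - a 1 + M0" using PP a1bn by linarith
      then obtain P' where P': "P = Suc P'" by (cases P) auto
      note G = gamma_orbit[OF assms(2)]
      have y0: "i \<in> {1..n} \<Longrightarrow> orb i 0 = y i" for i using orbs by (simp add: orbit_of_def)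
      define u where "u i t = (if t \<le> K then y i (K - t) else orb i (t - K) 0)" for i t
      have uorb: "u i (Suc t) \<in> F (u i t)" if i: "i \<in> {1..n}" for i t
      proof -
        have yi: "y i \<in> ?S" using yS i by blast
        note g = G[OF yi orbs[rule_format, OF i]]
        consider "Suc t \<le> K" | "t = K" | "t > K" by linarith
        then show ?thesis
        proof cases
          case 1
          then have "K - t = Suc (K - Suc t)" by arith
          then show ?thesis using 1 yi by (simp add: u_def inv_lim_def)
        next
          case 2
          then show ?thesis using g(2)[of 0] y0[OF i] by (simp add: u_def)
        next
          case 3
          then have "Suc t - K = Suc (t - K)" by arith
          then show ?thesis using 3 g(2)[of "t - K"] by (simp add: u_def)
        qed
      qed
      have uX: "u i t \<in> X" if i: "i \<in> {1..n}" for i t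
      proof -
        have yi: "y i \<in> ?S" using yS i by blast
        note g = G[OF yi orbs[rule_format, OF i]]
        show ?thesis using yi g(3)[of "t - K"] by (auto simp: u_def inv_lim_def)
      qed
      have orbu: "orb i j k = u i (j + K - k)" if i: "i \<in> {1..n}" and k: "k \<le> j + K" for i j k
      proof -
        have yi: "y i \<in> ?S" using yS i by blast
        note g = G[OF yi orbs[rule_format, OF i]]
        show ?thesis using orb_u[where orb="orb i", OF g(1) k] y0[OF i] by (simp add: u_def)
      qed
      define y' where "y' i = u i (a 1)" for i
      define a' where "a' i = a i - a 1" for i
      define b' where "b' i = b i + K - a 1" for i
      define orb' where "orb' i t = u i (t + a 1)" for i t
      have hyp: "n \<ge> 1 \<and> (\<forall>i\<in>{1..n}. y' i \<in> X) \<and>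
      (\<forall>i\<in>{1..n}. a' i \<le> b' i) \<and>
      (\<forall>i. 1 \<le> i \<and> i < n \<longrightarrow> b' i < a' (Suc i) \<and> a' (Suc i) - b' i > M0) \<and>
      (\<forall>i\<in>{1..n}. orbit_of F (y' i) (orb' i)) \<and>
      P > M0 + b' n - a' 1"
      proof (intro conjI ballI allI impI)
        show "n \<ge> 1" by (rule n1)
        show "y' i \<in> X" if "i \<in> {1..n}" for i using uX[OF that] by (simp add: y'_def)
        show "a' i \<le> b' i" if "i \<in> {1..n}" for i
        proof -
          have "a i \<le> b i" using ab that by blast
          then show ?thesis unfolding a'_def b'_def by arith
        qed
        show "orbit_of F (y' i) (orb' i)" if "i \<in> {1..n}" for i
          using uorb[OF that] by (simp add: orbit_of_def y'_def orb'_def)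
        show "P > M0 + b' n - a' 1" using Pbig by (simp add: a'_def b'_def)
      next
        fix i assume i: "1 \<le> i \<and> i < n"
        then have "i \<in> {1..n}" "Suc i \<in> {1..n}" by auto
        then have "a 1 \<le> a i" "a i \<le> b i" "b i < a (Suc i)" "a (Suc i) - b i > M0 + K"
          using a1 ab gap i by auto
        then show "b' i < a' (Suc i)" "a' (Suc i) - b' i > M0"
          unfolding a'_def b'_def by arith+
      qed
      obtain z zs where z: "z \<in> X" "orbit_of F z zs"
        "\<forall>i\<in>{1..n}. \<forall>j\<in>{a' i..b' i}. dist (zs j) (orb' i j) < \<eta>" "zs P = z"
        using M0[rule_format, OF hyp] by blast
      have zsF: "zs (Suc t) \<in> F (zs t)" for t using z(2) by (simp add: orbit_of_def)
      have zX: "zs t \<in> X" for t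
      proof (induction t)
        case 0 then show ?case using z by (simp add: orbit_of_def)
      next
        case (Suc t) then show ?case using sub zsF[of t] by blast
      qed
      have zstep: "zs (Suc m mod P) \<in> F (zs (m mod P))" for m
      proof -
        define q where "q = m mod P"
        have q: "q < P" using Pbig by (simp add: q_def)
        have e1: "Suc m mod P = Suc q mod P" by (simp add: q_def mod_Suc_eq)
        show ?thesis
        proof (cases "Suc q < P")
          case True then show ?thesis using e1 zsF[of q] by (simp add: q_def)
        next
          case False
          then have "Suc q = P" using q by simp
          then show ?thesis using e1 zsF[of q] z(4) z(2)
            by (simp add: q_def orbit_of_def)
        qed
      qed
      define raw where "raw j k = j + K + P' * k + P' * a 1" for j k
      define Z where "Z j = (\<lambda>k. zs (raw j k mod P))" for j
      have r1: "raw j k mod P = Suc (raw j (Suc k)) mod P" for j k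
      proof -
        have "Suc (raw j (Suc k)) = raw j k + P" by (simp add: raw_def P')
        then show ?thesis by simp
      qed
      have ZS: "Z j \<in> ?S" for j
      proof -
        have "Z j k \<in> F (Z j (Suc k))" for k
          unfolding Z_def r1[of j k] by (rule zstep)
        then show ?thesis unfolding inv_lim_def using zX by (simp add: Z_def)
      qed
      have r2: "raw (Suc j) (Suc k) = raw j k + P" for j k by (simp add: raw_def P')
      have r3: "raw (Suc j) 0 = Suc (raw j 0)" for j by (simp add: raw_def)
      have r4: "raw P k = raw 0 k + P" for k by (simp add: raw_def)
      have Zorb: "orbit_of (gamma_map F) (Z 0) Z"
        unfolding orbit_of_def
      proof (intro conjI allI)
        fix j
        have "Z (Suc j) = (\<lambda>i. if i = 0 then Z (Suc j) 0 else Z j (i - 1))"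
        proof
          fix i show "Z (Suc j) i = (if i = 0 then Z (Suc j) 0 else Z j (i - 1))"
            by (cases i) (simp_all add: Z_def r2)
        qed
        moreover have "Z (Suc j) 0 \<in> F (Z j 0)" using zstep by (simp add: Z_def r3)
        ultimately show "Z (Suc j) \<in> gamma_map F (Z j)"
          unfolding gamma_map_def by blast
      qed simp
      have ZP: "Z P = Z 0" by (simp add: Z_def r4 fun_eq_iff)
      have close: "\<rho> (Z j) (orb i j) < \<epsilon>" if i: "i \<in> {1..n}" and j: "j \<in> {a i..b i}" for i j
      proof -
        have yi: "y i \<in> ?S" using yS i by blast
        note g = G[OF yi orbs[rule_format, OF i]]
        have aij: "a 1 \<le> j" "j \<le> b n" using a1[OF i] bn[OF i] j by auto
        have "dist (Z j k) (orb i j k) < \<eta>" if k: "k \<le> K" for k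
        proof -
          define t where "t = j + K - k - a 1"
          have rt: "raw j k = t + P * (k + a 1)"
            using k aij by (simp add: raw_def t_def P' algebra_simps)
          have tP: "t < P" using Pbig k aij by (simp add: t_def)
          have "Z j k = zs t" using tP by (simp add: Z_def rt)
          moreover have "orb i j k = orb' i t"
            using orbu[OF i, of k j] k aij by (simp add: orb'_def t_def)
          moreover have "t \<in> {a' i..b' i}" using j k aij by (auto simp: a'_def b'_def t_def)
          ultimately show ?thesis using z(3) i by auto
        qed
        then have "dist (Z j) (orb i j) < 2 * \<eta> + (1/2)^N"
          by (intro dist_fun_small) (simp add: K_def)
        also have "\<dots> < \<delta>" using N d(1) unfolding \<eta>_def by linarith
        finally show ?thesis using d(2) ZS g(3) by blast
      qed
      show "\<exists>z\<in>?S. \<exists>zs. orbit_of (gamma_map F) z zs \<and>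
             (\<forall>i\<in>{1..n}. \<forall>j\<in>{a i..b i}. \<rho> (zs j) (orb i j) < \<epsilon>) \<and> zs P = z"
        using ZS Zorb ZP close by blast
    qed
  qed
qed


end
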